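(* Let $X$ be a proper geodesic metric space equipped with the $C_0$ coarse structure, and let $f:X\to\mathbb{C}$ be a bounded continuous function. Then $f$ is a Higson function (i.e., $f\in C_{h_0}(X)$) if and only if $f$ is uniformly continuous.
   Context: The $C_0$ coarse structure on a metric space $(X,d)$ consists of all sets $E\subset X\times X$ such that for every $\epsilon>0$ there is a compact $K\subset X$ with $d(x,y)<\epsilon$ for all $(x,y)\in E\setminus(K\times K)$; such $E$ are called controlled sets. For a bounded continuous $f:X\to\mathbb{C}$ let $\mathbf{d}f:X\times X\to\mathbb{C}$, $\mathbf{d}f(x,y)=f(x)-f(y)$. $f$ is a Higson function if for every controlled set $E$ the restriction $\mathbf{d}f|_E$ vanishes at infinity (for every $\epsilon>0$ there is a compact $L\subset X\times X$ with $|\mathbf{d}f|<\epsilon$ on $E\setminus L$). $C_{h_0}(X)$ is the set of bounded continuous Higson functions. A map $f$ between metric spaces is uniformly continuous if there is a monotone $\omega:[0,\infty)\to[0,\infty)$ with $\lim_{t\to0}\omega(t)=0$ and $d(f(x),f(x'))\le\omega(d(x,x'))$ for all $x,x'$. *)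

theory Defs
  imports "HOL-Analysis.Analysis"
begin

definition proper_metric_space :: "'a::metric_space itself \<Rightarrow> bool" where
  "proper_metric_space _ \<longleftrightarrow> (\<forall>S::'a set. bounded S \<and> closed S \<longrightarrow> compact S)"

definition geodesic_space :: "'a::metric_space itself \<Rightarrow> bool" where
  "geodesic_space _ \<longleftrightarrow> (\<forall>x y::'a. \<exists>\<gamma>::real \<Rightarrow> 'a.
      \<gamma> 0 = x \<and> \<gamma> (dist x y) = y \<and>
      (\<forall>s\<in>{0..dist x y}. \<forall>t\<in>{0..dist x y}. dist (\<gamma> s) (\<gamma> t) = \<bar>s - t\<bar>))"

definition C0_controlled :: "('a::metric_space \<times> 'a) set \<Rightarrow> bool" where
  "C0_controlled E \<longleftrightarrow> (\<forall>\<epsilon>>0. \<exists>K. compact K \<and>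
      (\<forall>(x,y)\<in>E - K \<times> K. dist x y < \<epsilon>))"

definition higson_function :: "('a::metric_space \<Rightarrow> complex) \<Rightarrow> bool" where
  "higson_function f \<longleftrightarrow> (\<forall>E. C0_controlled E \<longrightarrow>
      (\<forall>\<epsilon>>0. \<exists>L::('a \<times> 'a) set. compact L \<and>
         (\<forall>(x,y)\<in>E - L. norm (f x - f y) < \<epsilon>)))"

definition C_h0 :: "('a::metric_space \<Rightarrow> complex) set" where
  "C_h0 = {f. bounded (range f) \<and> continuous_on UNIV f \<and> higson_function f}"

definition unif_cont_modulus :: "('a::metric_space \<Rightarrow> 'b::metric_space) \<Rightarrow> bool" where
  "unif_cont_modulus f \<longleftrightarrow> (\<exists>\<omega>::real \<Rightarrow> real.
      mono_on {0..} \<omega> \<and> (\<forall>t\<ge>0. \<omega> t \<ge> 0) \<and> (\<omega> \<longlongrightarrow> 0) (at_right 0) \<and>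
      (\<forall>x x'. dist (f x) (f x') \<le> \<omega> (dist x x')))"

end

theory Submission
  imports Defs
begin

lemma uc_imp_higson:
  fixes f :: "'a::metric_space \<Rightarrow> complex"
  assumes "unif_cont_modulus f"
  shows "higson_function f"
proof -
  obtain \<omega> :: "real \<Rightarrow> real" where lim: "(\<omega> \<longlongrightarrow> 0) (at_right 0)"
    and om: "\<forall>x x'. dist (f x) (f x') \<le> \<omega> (dist x x')"
    using assms unfolding unif_cont_modulus_def by blast
  show ?thesis unfolding higson_function_def
  proof (intro allI impI)
    fix E :: "('a \<times> 'a) set" and e :: real
    assume E: "C0_controlled E" and e: "e > 0"
    have "eventually (\<lambda>t. dist (\<omega> t) 0 < e) (at_right (0::real))"
      using lim e by (simp add: tendsto_iff)
    then obtain b :: real where b: "b > 0" "\<And>t. t > 0 \<Longrightarrow> t < b \<Longrightarrow> dist (\<omega> t) 0 < e"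
      unfolding eventually_at_right_field by blast
    obtain K where K: "compact K" "\<forall>(x,y)\<in>E - K \<times> K. dist x y < b"
      using E b(1) unfolding C0_controlled_def by blast
    have A: "norm (f x - f y) < e" if xy: "(x,y) \<in> E - K \<times> K" for x y
    proof -
      have d: "dist x y < b" using K(2) xy by blast
      show "norm (f x - f y) < e"
      proof (cases "x = y")
        case True then show ?thesis using e by simp
      next
        case False
        then have "dist x y > 0" by simp
        then have "\<omega> (dist x y) < e" using b(2)[OF _ d] by (simp add: dist_real_def)
        moreover have "norm (f x - f y) \<le> \<omega> (dist x y)" using om by (simp add: dist_norm)
        ultimately show ?thesis by linarith
      qed
    qed
    moreover have "compact (K \<times> K)" using K(1) by (simp add: compact_Times)
    ultimately show "\<exists>L. compact L \<and> (\<forall>(x,y)\<in>E - L. norm (f x - f y) < e)" by blast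
  qed
qed

lemma higson_imp_uc:
  fixes f :: "'a::metric_space \<Rightarrow> complex"
  assumes h: "higson_function f" and c: "continuous_on UNIV f" and e: "e > 0"
  shows "\<exists>d>0. \<forall>x y. dist x y < d \<longrightarrow> norm (f x - f y) < e"
proof (rule ccontr)
  assume neg: "\<not> ?thesis"
  have "\<forall>n::nat. \<exists>p. dist (fst p) (snd p) < 1 / (real n + 1) \<and> norm (f (fst p) - f (snd p)) \<ge> e"
  proof
    fix n :: nat
    have "1 / (real n + 1) > 0" by simp
    then obtain x y where "dist x y < 1 / (real n + 1)" "\<not> norm (f x - f y) < e"
      using neg by blast
    then show "\<exists>p. dist (fst p) (snd p) < 1 / (real n + 1) \<and> norm (f (fst p) - f (snd p)) \<ge> e"
      by (intro exI[of _ "(x,y)"]) simp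
  qed
  then obtain p :: "nat \<Rightarrow> 'a \<times> 'a" where p:
    "\<And>n. dist (fst (p n)) (snd (p n)) < 1 / (real n + 1)"
    "\<And>n. norm (f (fst (p n)) - f (snd (p n))) \<ge> e"
    by metis
  define E where "E = range p"
  have "C0_controlled E"
    unfolding C0_controlled_def
  proof (intro allI impI)
    fix \<epsilon> :: real assume "\<epsilon> > 0"
    then obtain N :: nat where N: "1 / (real N + 1) < \<epsilon>"
      using nat_approx_posE by (metis of_nat_Suc add.commute)
    define K where "K = fst ` p ` {..N} \<union> snd ` p ` {..N}"
    have "finite K" unfolding K_def by simp
    then have "compact K" by (rule finite_imp_compact)
    moreover have "dist x y < \<epsilon>" if xy: "(x,y) \<in> E" "(x,y) \<notin> K \<times> K" for x y
    proof -
      obtain n where n: "p n = (x,y)" using xy(1) unfolding E_def by auto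
      have "n > N"
      proof (rule ccontr)
        assume "\<not> n > N"
        then have "n \<in> {..N}" by simp
        then have "x \<in> K" "y \<in> K" unfolding K_def using n
          by (metis UnI1 UnI2 fst_conv snd_conv image_eqI)+
        then show False using xy(2) by blast
      qed
      have "1 / (real n + 1) \<le> 1 / (real N + 1)"
        using \<open>n > N\<close> by (simp add: frac_le)
      then show "dist x y < \<epsilon>" using p(1)[of n] n N by simp
    qed
    ultimately show "\<exists>K. compact K \<and> (\<forall>(x,y)\<in>E - K \<times> K. dist x y < \<epsilon>)" by blast
  qed
  then obtain L where L: "compact L" "\<forall>(x,y)\<in>E - L. norm (f x - f y) < e"
    using h e unfolding higson_function_def by blast
  have pL: "\<forall>n. p n \<in> L"
  proof
    fix n
    show "p n \<in> L"
    proof (rule ccontr)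
      assume "p n \<notin> L"
      then have "p n \<in> E - L" unfolding E_def by simp
      then have "norm (f (fst (p n)) - f (snd (p n))) < e" using L(2)
        by (metis (mono_tags, lifting) case_prod_beta)
      then show False using p(2)[of n] by simp
    qed
  qed
  obtain l r where lr: "l \<in> L" "strict_mono r" "(p \<circ> r) \<longlonglongrightarrow> l"
    using L(1) pL unfolding compact_def by blast
  define a where "a = fst l"
  define b where "b = snd l"
  have xa: "(\<lambda>n. fst (p (r n))) \<longlonglongrightarrow> a"
    unfolding a_def using tendsto_fst[OF lr(3)] by (simp add: o_def)
  have yb: "(\<lambda>n. snd (p (r n))) \<longlonglongrightarrow> b"
    unfolding b_def using tendsto_snd[OF lr(3)] by (simp add: o_def)
  have d1: "(\<lambda>n. dist (fst (p (r n))) (snd (p (r n)))) \<longlonglongrightarrow> dist a b"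
    using tendsto_dist[OF xa yb] .
  have d0: "(\<lambda>n. dist (fst (p (r n))) (snd (p (r n)))) \<longlonglongrightarrow> 0"
  proof (rule tendsto_sandwich[of "\<lambda>_. 0" _ _ "\<lambda>n. 1 / (real n + 1)"])
    show "\<forall>\<^sub>F n in sequentially. 0 \<le> dist (fst (p (r n))) (snd (p (r n)))" by simp
    show "\<forall>\<^sub>F n in sequentially. dist (fst (p (r n))) (snd (p (r n))) \<le> 1 / (real n + 1)"
    proof (intro always_eventually allI)
      fix n
      have "n \<le> r n" using lr(2) by (rule seq_suble)
      then have "1 / (real (r n) + 1) \<le> 1 / (real n + 1)" by (simp add: frac_le)
      then show "dist (fst (p (r n))) (snd (p (r n))) \<le> 1 / (real n + 1)"
        using p(1)[of "r n"] by linarith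
    qed
    show "(\<lambda>n. 0::real) \<longlonglongrightarrow> 0" by simp
    show "(\<lambda>n. 1 / (real n + 1)) \<longlonglongrightarrow> 0" using LIMSEQ_inverse_real_of_nat by (simp add: inverse_eq_divide add.commute)
  qed
  have "dist a b = 0" using LIMSEQ_unique[OF d1 d0] .
  then have ab: "a = b" by simp
  have ic: "isCont f a" using c by (simp add: continuous_on_eq_continuous_at)
  have fx: "(\<lambda>n. f (fst (p (r n)))) \<longlonglongrightarrow> f a" using isCont_tendsto_compose[OF ic xa] .
  have fy: "(\<lambda>n. f (snd (p (r n)))) \<longlonglongrightarrow> f a" using isCont_tendsto_compose[OF ic yb[unfolded ab[symmetric]]] .
  have "(\<lambda>n. norm (f (fst (p (r n))) - f (snd (p (r n))))) \<longlonglongrightarrow> norm (f a - f a)"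
    by (intro tendsto_intros fx fy)
  then have "(\<lambda>n. norm (f (fst (p (r n))) - f (snd (p (r n))))) \<longlonglongrightarrow> 0" by simp
  then have "eventually (\<lambda>n. norm (f (fst (p (r n))) - f (snd (p (r n)))) < e) sequentially"
    using e by (rule order_tendstoD)
  then obtain N where "\<And>n. n \<ge> N \<Longrightarrow> norm (f (fst (p (r n))) - f (snd (p (r n)))) < e"
    unfolding eventually_sequentially by blast
  then have "norm (f (fst (p (r N))) - f (snd (p (r N)))) < e" by simp
  then show False using p(2)[of "r N"] by simp
qed


lemma eps_delta_imp_modulus:
  fixes f :: "'a::metric_space \<Rightarrow> complex"
  assumes bd: "bounded (range f)"
    and uc: "\<And>e. e > 0 \<Longrightarrow> \<exists>d>0. \<forall>x y. dist x y < d \<longrightarrow> norm (f x - f y) < e"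
  shows "unif_cont_modulus f"
proof -
  obtain B where B: "\<And>x. norm (f x) \<le> B"
    using bd unfolding bounded_iff by blast
  define g where "g = (\<lambda>p::'a \<times> 'a. norm (f (fst p) - f (snd p)))"
  define S where "S = (\<lambda>t::real. {p::'a \<times> 'a. dist (fst p) (snd p) \<le> t})"
  define \<omega> where "\<omega> = (\<lambda>t. Sup (g ` S t))"
  have gB: "g p \<le> 2 * B" for p
  proof -
    have "g p \<le> norm (f (fst p)) + norm (f (snd p))" unfolding g_def by (rule norm_triangle_ineq4)
    also have "\<dots> \<le> 2 * B" using B[of "fst p"] B[of "snd p"] by simp
    finally show ?thesis .
  qed
  have bdd: "bdd_above (g ` A)" for A
    by (rule bdd_aboveI2[where M = "2 * B"]) (rule gB)
  have ne: "S t \<noteq> {}" if "t \<ge> 0" for t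
  proof -
    have "(undefined, undefined) \<in> S t" unfolding S_def using that by simp
    then show ?thesis by blast
  qed
  have mono: "mono_on {0..} \<omega>"
  proof (rule mono_onI)
    fix s t :: real assume "s \<in> {0..}" "t \<in> {0..}" "s \<le> t"
    then show "\<omega> s \<le> \<omega> t" unfolding \<omega>_def
      by (intro cSUP_subset_mono ne bdd) (auto simp: S_def)
  qed
  have nonneg: "\<forall>t\<ge>0. \<omega> t \<ge> 0"
  proof (intro allI impI)
    fix t :: real assume t: "t \<ge> 0"
    have "(undefined, undefined) \<in> S t" unfolding S_def using t by simp
    then show "\<omega> t \<ge> 0" unfolding \<omega>_def
      by (intro cSUP_upper2[OF bdd]) (auto simp: g_def)
  qed
  have bound: "\<forall>x x'. dist (f x) (f x') \<le> \<omega> (dist x x')"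
  proof (intro allI)
    fix x x' :: 'a
    have "(x, x') \<in> S (dist x x')" unfolding S_def by simp
    then have "g (x, x') \<le> \<omega> (dist x x')" unfolding \<omega>_def by (intro cSUP_upper bdd)
    then show "dist (f x) (f x') \<le> \<omega> (dist x x')" by (simp add: g_def dist_norm)
  qed
  have lim: "(\<omega> \<longlongrightarrow> 0) (at_right 0)"
    unfolding tendsto_iff
  proof (intro allI impI)
    fix e :: real assume e: "e > 0"
    obtain d where d: "d > 0" "\<forall>x y. dist x y < d \<longrightarrow> norm (f x - f y) < e / 2"
      using uc[of "e/2"] e by auto
    show "eventually (\<lambda>t. dist (\<omega> t) 0 < e) (at_right 0)"
      unfolding eventually_at_right_field
    proof (intro exI[of _ d] conjI allI impI)
      show "d > 0" by fact
      fix t :: real assume t: "t > 0" "t < d"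
      have "\<omega> t \<le> e / 2" unfolding \<omega>_def
      proof (rule cSUP_least)
        show "S t \<noteq> {}" using ne t by simp
        fix p assume "p \<in> S t"
        then have "dist (fst p) (snd p) < d" using t unfolding S_def by simp
        then show "g p \<le> e / 2" using d(2) unfolding g_def by (meson less_imp_le)
      qed
      moreover have "\<omega> t \<ge> 0" using nonneg t by simp
      ultimately show "dist (\<omega> t) 0 < e" using e by (simp add: dist_real_def)
    qed
  qed
  show ?thesis unfolding unif_cont_modulus_def
    using mono nonneg lim bound by blast
qed

theorem theorem3p4:
  fixes f :: "'a::metric_space \<Rightarrow> complex"
  assumes "proper_metric_space TYPE('a)"
    and "geodesic_space TYPE('a)"
    and "bounded (range f)"
    and "continuous_on UNIV f"
  shows "f \<in> C_h0 \<longleftrightarrow> unif_cont_modulus f"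
proof
  assume "f \<in> C_h0"
  then have h: "higson_function f" unfolding C_h0_def by simp
  show "unif_cont_modulus f"
    by (rule eps_delta_imp_modulus[OF assms(3)]) (rule higson_imp_uc[OF h assms(4)])
next
  assume "unif_cont_modulus f"
  then have "higson_function f" by (rule uc_imp_higson)
  then show "f \<in> C_h0" unfolding C_h0_def using assms(3,4) by simp
qed

end
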